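(* Let $X$ be a finite alphabet, $\#$ a symbol not in $X$, and $X^\# = X \cup \{\#\}$. Let $w \in (\overline{X^\#})^*$ be a word representing the identity in the polycyclic monoid $P(X^\#)$, and suppose $w = uv$. Then there exists a factorisation $v = st$ such that (i) either $t = \epsilon$ or $t$ begins with a negative generator, and (ii) the word $u \# s \#^{-1} t$ also represents the identity in $P(X^\#)$.
   Context: For an alphabet $Y$, $\overline{Y} = \{y, y^{-1} : y \in Y\}$; letters of $Y$ are positive generators and letters $y^{-1}$ negative generators. The polycyclic monoid $P(Y)$ is the monoid of partial functions on $Y^*$ (composed left to right: $fg$ means apply $f$ then $g$) generated by $y: z \mapsto zy$ (defined everywhere) and $y^{-1}: zy \mapsto z$ (defined on $Y^*y$), $y \in Y$; a word over $\overline{Y}$ represents the identity of $P(Y)$ exactly when it can be reduced to the empty word by successively deleting factors $yy^{-1}$ with $y \in Y$. $\epsilon$ denotes the empty word. *)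

theory Defs
  imports Main
begin

text \<open>Signed generators: Pos y stands for y, Neg y for y^-1.\<close>
datatype 'a gen = Pos 'a | Neg 'a

fun gen_letter :: "'a gen \<Rightarrow> 'a" where
  "gen_letter (Pos y) = y"
| "gen_letter (Neg y) = y"

inductive red_step :: "'a gen list \<Rightarrow> 'a gen list \<Rightarrow> bool" where
  "red_step (a @ [Pos y, Neg y] @ b) (a @ b)"

text \<open>A word represents the identity of the polycyclic monoid iff it
  reduces to the empty word by successively deleting factors y y^-1.\<close>
definition represents_identity :: "'a gen list \<Rightarrow> bool" where
  "represents_identity w \<longleftrightarrow> red_step\<^sup>*\<^sup>* w []"

end

theory Submission
  imports Defs
begin

fun stp :: "'a gen list \<Rightarrow> 'a gen \<Rightarrow> 'a gen list" where
  "stp st (Pos y) = Pos y # st"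
| "stp (Pos z # r) (Neg y) = (if z = y then r else Neg y # Pos z # r)"
| "stp st (Neg y) = Neg y # st"

lemma stp_cancel[simp]: "stp (stp st (Pos y)) (Neg y) = st"
  by simp

lemma red_nf: "red_step a b \<Longrightarrow> foldl stp st a = foldl stp st b"
  by (induction rule: red_step.induct) simp

lemma rt_nf: "red_step\<^sup>*\<^sup>* a b \<Longrightarrow> foldl stp st a = foldl stp st b"
  by (induction rule: rtranclp_induct) (auto dest: red_nf[where st=st])

lemma nf_red: "red_step\<^sup>*\<^sup>* (rev st @ w) (rev (foldl stp st w))"
proof (induction w arbitrary: st)
  case Nil then show ?case by simp
next
  case (Cons x w)
  have "red_step\<^sup>*\<^sup>* (rev st @ x # w) (rev (stp st x) @ w)"
  proof (cases "\<exists>y r. x = Neg y \<and> st = Pos y # r")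
    case True
    then obtain y r where "x = Neg y" "st = Pos y # r" by blast
    then show ?thesis
      using red_step.intros[of "rev r" y w] by simp
  next
    case False
    then have "stp st x = x # st"
      by (cases x; cases st rule: list.exhaust; auto split: gen.splits)
         (metis gen.exhaust stp.simps)+
    then show ?thesis by simp
  qed
  then show ?case using Cons[of "stp st x"] by simp
qed

lemma ri_iff: "represents_identity w \<longleftrightarrow> foldl stp [] w = []"
  unfolding represents_identity_def
  using rt_nf[of w "[]" "[]"] nf_red[of "[]" w] by auto

lemma neg_stays: "Neg z \<in> set st \<Longrightarrow> Neg z \<in> set (foldl stp st l)"
proof (induction l arbitrary: st)
  case Nil then show ?case by simp
next
  case (Cons x l)
  have "Neg z \<in> set (stp st x)"
    using Cons.prems
    by (cases x; cases st rule: list.exhaust; auto split: gen.splits)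
       (metis gen.exhaust list.set_intros stp.simps set_ConsD gen.distinct)+
  then show ?case using Cons.IH by simp
qed

lemma split_lem:
  "foldl stp S v = [] \<Longrightarrow> \<exists>s t. v = s @ t \<and> (t = [] \<or> (\<exists>y r. t = Neg y # r))
     \<and> (\<forall>X. foldl stp X s = X) \<and> foldl stp S t = []"
proof (induction v arbitrary: S rule: length_induct)
  case (1 v)
  show ?case
  proof (cases v)
    case Nil then show ?thesis using 1 by auto
  next
    case (Cons x r)
    show ?thesis
    proof (cases x)
      case (Neg y) then show ?thesis using 1(2) Cons
        by (intro exI[of _ "[]"] exI[of _ v]) simp
    next
      case (Pos y)
      have fr: "foldl stp (Pos y # S) r = []" using 1(2) Cons Pos by simp
      from 1(1)[rule_format, of r, OF _ fr] Cons obtain s1 t1 where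
        A: "r = s1 @ t1" "t1 = [] \<or> (\<exists>y r. t1 = Neg y # r)" "\<forall>X. foldl stp X s1 = X"
           "foldl stp (Pos y # S) t1 = []" by auto
      then obtain z r2 where t1: "t1 = Neg z # r2" by auto
      have zy: "z = y"
      proof (rule ccontr)
        assume "z \<noteq> y"
        then have "foldl stp (Pos y # S) t1 = foldl stp (Neg z # Pos y # S) r2" using t1 by simp
        moreover have "Neg z \<in> set (foldl stp (Neg z # Pos y # S) r2)" by (rule neg_stays) simp
        ultimately show False using A(4) by simp
      qed
      have r2: "foldl stp S r2 = []" using A(4) t1 zy by simp
      have "length r2 < length v" using Cons A(1) t1 by simp
      from 1(1)[rule_format, OF this r2] obtain s2 t2 where
        B: "r2 = s2 @ t2" "t2 = [] \<or> (\<exists>y r. t2 = Neg y # r)" "\<forall>X. foldl stp X s2 = X"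
           "foldl stp S t2 = []" by auto
      show ?thesis
        apply (rule exI[of _ "Pos y # s1 @ [Neg y] @ s2"], rule exI[of _ t2])
        using A B Cons Pos t1 zy by simp
    qed
  qed
qed

theorem lemma4p9:
  fixes X :: "'a set" and h :: 'a and w u v :: "'a gen list"
  assumes "finite X"
    and "h \<notin> X"
    and "gen_letter ` set w \<subseteq> insert h X"
    and "represents_identity w"
    and "w = u @ v"
  shows "\<exists>s t. v = s @ t \<and> (t = [] \<or> (\<exists>y r. t = Neg y # r))
           \<and> represents_identity (u @ [Pos h] @ s @ [Neg h] @ t)"
proof -
  have "foldl stp (foldl stp [] u) v = []" using assms(4,5) ri_iff[of w] by simp
  from split_lem[OF this] obtain s t where
    C: "v = s @ t" "t = [] \<or> (\<exists>y r. t = Neg y # r)" "\<forall>X. foldl stp X s = X"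
       "foldl stp (foldl stp [] u) t = []" by blast
  show ?thesis
    apply (rule exI[of _ s], rule exI[of _ t])
    using C by (simp add: ri_iff)
qed

end
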